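(* In the Call-by-Value probabilistic $\lambda$-calculus (as defined in the context), for every multi-distribution $\mathbf m$ and every subdistribution $\mathbf r$: if $\mathbf m\Rightarrow^{\mathrm{obs}_{\mathrm{Nnf}}}\mathbf r$ then $\mathbf m\Rightarrow_E^{\mathrm{obs}_{\mathrm{Nnf}}}\mathbf r$.
   Context: Terms $\Lambda_\oplus$: $M::=x\mid\lambda x.M\mid MM\mid M\oplus M$; values $V::=x\mid\lambda x.M$. Contexts $C::=[\,]\mid MC\mid CM\mid\lambda x.C\mid C\oplus M\mid M\oplus C$; weak contexts $W::=[\,]\mid WM\mid MW$. A multi-distribution is a finite multiset $[p_iM_i]_{i\in I}$ with $p_i\in(0,1]$, $\sum_ip_i\le1$; $+$ is multiset union, $q\cdot[p_iM_i]_i=[(qp_i)M_i]_i$, $[M]:=[1M]$. $C[(\lambda x.M)V]\to_{\beta_v}[C[M\{V/x\}]]$; $W[M\oplus N]\to_\oplus[\tfrac12W[M],\tfrac12W[N]]$; $\to:=\to_{\beta_v}\cup\to_\oplus$; surface reduction $\to_s$ is $\to_\oplus$ together with the closure of $\beta_v$ under weak contexts. $M$ is $\to$-normal (surface-normal) if no $\mathbf m$ with $M\to\mathbf m$ ($M\to_s\mathbf m$); $\mathrm{Nnf}$ is the set of $\to$-normal terms. The lifting $\Rightarrow_r$ of a relation $r$ is the least relation with $[M]\Rightarrow_r[M]$; $[M]\Rightarrow_r\mathbf m$ if $M\,r\,\mathbf m$; $[p_iM_i]_{i\in I}\Rightarrow_r\sum_ip_i\cdot\mathbf m_i$ if $[M_i]\Rightarrow_r\mathbf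 m_i$ for all $i$. $\Rightarrow$ is the lifting of $\to$. Let $\rightsquigarrow_U$ be the unbiased iteration of weak $\beta_v$-reduction on $\Lambda_\oplus$: if $M\to_wM'$ (closure of $\beta_v$ under weak contexts) then $M\rightsquigarrow_UM'$; if $M$ is $\to_w$-normal: $\lambda x.P\rightsquigarrow_U\lambda x.P'$, $PQ\rightsquigarrow_UP'Q$, $PQ\rightsquigarrow_UPQ'$, $P\oplus Q\rightsquigarrow_UP'\oplus Q$, $P\oplus Q\rightsquigarrow_UP\oplus Q'$ whenever $P\rightsquigarrow_UP'$, resp. $Q\rightsquigarrow_UQ'$. $\rightsquigarrow_E$: if $M$ is not surface-normal and $M\to_s\mathbf m$ then $M\rightsquigarrow_E\mathbf m$; if $M$ is surface-normal and $M\rightsquigarrow_UM'$ then $M\rightsquigarrow_E[M']$; $\Rightarrow_E$ is its lifting. $\mathrm{obs}_{\mathrm{Nnf}}([p_iM_i]_{i\in I})$ is the subdistribution $\mu$ on $\mathrm{Nnf}$ with $\mu(N)=\sum_{i:\,M_i=N}p_i$; subdistributions are ordered pointwise (an $\omega$-cpo with least element the zero subdistribution). For a relation $R$ on multi-distributions, $\mathbf m\,R^{\mathrm{obs}_{\mathrm{Nnf}}}\,\mathbf r$ means there is a maximal $R$-sequence $(\mathbf m_n)_n$ from $\mathbf m$ (infinite, or finite ending in an $R$-normal element and then continued constantly) with $\sup_n\mathrm{obs}_{\mathrm{Nnf}}(\mathbf m_n)=\mathbf r$. *)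

theory Defs
  imports Complex_Main "HOL-Library.Multiset"
begin

datatype tm = Var nat | Lam tm | App tm tm | Choice tm tm  (* Choice M N = M \<oplus> N *)

fun is_value :: "tm \<Rightarrow> bool" where
  "is_value (Var _) = True"
| "is_value (Lam _) = True"
| "is_value _ = False"

fun shift :: "nat \<Rightarrow> tm \<Rightarrow> tm" where
  "shift k (Var i) = (if i < k then Var i else Var (Suc i))"
| "shift k (Lam M) = Lam (shift (Suc k) M)"
| "shift k (App M N) = App (shift k M) (shift k N)"
| "shift k (Choice M N) = Choice (shift k M) (shift k N)"

(* subst M k V = M{V/k} (capture-avoiding, indices above k decremented) *)
fun subst :: "tm \<Rightarrow> nat \<Rightarrow> tm \<Rightarrow> tm" where
  "subst (Var i) k V = (if i < k then Var i else if i = k then V else Var (i - 1))"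
| "subst (Lam M) k V = Lam (subst M (Suc k) (shift 0 V))"
| "subst (App M N) k V = App (subst M k V) (subst N k V)"
| "subst (Choice M N) k V = Choice (subst M k V) (subst N k V)"

type_synonym mdist = "(real \<times> tm) multiset"

definition is_mdist :: "mdist \<Rightarrow> bool" where
  "is_mdist m \<longleftrightarrow> (\<forall>x\<in>#m. 0 < fst x \<and> fst x \<le> 1) \<and> sum_mset (image_mset fst m) \<le> 1"

definition single :: "tm \<Rightarrow> mdist" where
  "single M = {#(1, M)#}"

definition scale :: "real \<Rightarrow> mdist \<Rightarrow> mdist" where
  "scale q m = image_mset (\<lambda>(p, M). (q * p, M)) m"

inductive beta :: "tm \<Rightarrow> tm \<Rightarrow> bool" where
  base: "is_value V \<Longrightarrow> beta (App (Lam M) V) (subst M 0 V)"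
| appL: "beta M M' \<Longrightarrow> beta (App M N) (App M' N)"
| appR: "beta N N' \<Longrightarrow> beta (App M N) (App M N')"
| lam: "beta M M' \<Longrightarrow> beta (Lam M) (Lam M')"
| chL: "beta M M' \<Longrightarrow> beta (Choice M N) (Choice M' N)"
| chR: "beta N N' \<Longrightarrow> beta (Choice M N) (Choice M N')"

inductive wbeta :: "tm \<Rightarrow> tm \<Rightarrow> bool" where
  base: "is_value V \<Longrightarrow> wbeta (App (Lam M) V) (subst M 0 V)"
| appL: "wbeta M M' \<Longrightarrow> wbeta (App M N) (App M' N)"
| appR: "wbeta N N' \<Longrightarrow> wbeta (App M N) (App M N')"

(* oplus_ctx T A B : T = W[M \<oplus> N], A = W[M], B = W[N] for a weak context W *)
inductive oplus_ctx :: "tm \<Rightarrow> tm \<Rightarrow> tm \<Rightarrow> bool" where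
  base: "oplus_ctx (Choice M N) M N"
| appL: "oplus_ctx M A B \<Longrightarrow> oplus_ctx (App M Q) (App A Q) (App B Q)"
| appR: "oplus_ctx M A B \<Longrightarrow> oplus_ctx (App Q M) (App Q A) (App Q B)"

definition oplus_step :: "tm \<Rightarrow> mdist \<Rightarrow> bool" where
  "oplus_step M m \<longleftrightarrow> (\<exists>A B. oplus_ctx M A B \<and> m = {#(1/2, A), (1/2, B)#})"

definition step :: "tm \<Rightarrow> mdist \<Rightarrow> bool" where
  "step M m \<longleftrightarrow> (\<exists>M'. beta M M' \<and> m = single M') \<or> oplus_step M m"

definition sstep :: "tm \<Rightarrow> mdist \<Rightarrow> bool" where
  "sstep M m \<longleftrightarrow> (\<exists>M'. wbeta M M' \<and> m = single M') \<or> oplus_step M m"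

definition normal :: "tm \<Rightarrow> bool" where
  "normal M \<longleftrightarrow> \<not> (\<exists>m. step M m)"

definition surface_normal :: "tm \<Rightarrow> bool" where
  "surface_normal M \<longleftrightarrow> \<not> (\<exists>m. sstep M m)"

definition wnormal :: "tm \<Rightarrow> bool" where
  "wnormal M \<longleftrightarrow> \<not> (\<exists>M'. wbeta M M')"

inductive U :: "tm \<Rightarrow> tm \<Rightarrow> bool" where
  weak: "wbeta M M' \<Longrightarrow> U M M'"
| lam: "wnormal (Lam P) \<Longrightarrow> U P P' \<Longrightarrow> U (Lam P) (Lam P')"
| appL: "wnormal (App P Q) \<Longrightarrow> U P P' \<Longrightarrow> U (App P Q) (App P' Q)"
| appR: "wnormal (App P Q) \<Longrightarrow> U Q Q' \<Longrightarrow> U (App P Q) (App P Q')"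
| chL: "wnormal (Choice P Q) \<Longrightarrow> U P P' \<Longrightarrow> U (Choice P Q) (Choice P' Q)"
| chR: "wnormal (Choice P Q) \<Longrightarrow> U Q Q' \<Longrightarrow> U (Choice P Q) (Choice P Q')"

definition E_step :: "tm \<Rightarrow> mdist \<Rightarrow> bool" where
  "E_step M m \<longleftrightarrow>
     (\<not> surface_normal M \<and> sstep M m) \<or>
     (surface_normal M \<and> (\<exists>M'. U M M' \<and> m = single M'))"

(* the family [p_i M_i]_{i\<in>I} is given as a list ps (finite index set); ms lists the m_i *)
inductive lift :: "(tm \<Rightarrow> mdist \<Rightarrow> bool) \<Rightarrow> mdist \<Rightarrow> mdist \<Rightarrow> bool" for r where
  refl: "lift r (single M) (single M)"
| one: "r M m \<Longrightarrow> lift r (single M) m"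
| sum: "list_all2 (\<lambda>x m. lift r (single (snd x)) m) ps ms \<Longrightarrow>
        lift r (mset ps) (sum_list (map2 (\<lambda>x m. scale (fst x) m) ps ms))"

(* subdistributions on terms, supported on Nnf *)
definition obs_Nnf :: "mdist \<Rightarrow> tm \<Rightarrow> real" where
  "obs_Nnf m N = (if normal N then sum_mset (image_mset fst (filter_mset (\<lambda>x. snd x = N) m)) else 0)"

definition max_seq :: "(mdist \<Rightarrow> mdist \<Rightarrow> bool) \<Rightarrow> mdist \<Rightarrow> (nat \<Rightarrow> mdist) \<Rightarrow> bool" where
  "max_seq R m ms \<longleftrightarrow> ms 0 = m \<and>
     (\<forall>n. R (ms n) (ms (Suc n)) \<or> ((\<nexists>x. R (ms n) x) \<and> ms (Suc n) = ms n))"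

definition obs_rel :: "(mdist \<Rightarrow> mdist \<Rightarrow> bool) \<Rightarrow> mdist \<Rightarrow> (tm \<Rightarrow> real) \<Rightarrow> bool" where
  "obs_rel R m r \<longleftrightarrow> (\<exists>ms. max_seq R m ms \<and> r = (\<lambda>N. SUP n. obs_Nnf (ms n) N))"

end

theory Submission
  imports Defs
begin


lemma subst_eq [simp]: "subst (Var k) k u = u" by simp
lemma subst_gt [simp]: "i < j \<Longrightarrow> subst (Var j) i u = Var (j - 1)" by simp
lemma subst_lt [simp]: "j < i \<Longrightarrow> subst (Var j) i u = Var j" by simp
declare subst.simps(1)[simp del]

lemma shift_shift:
    "i < k + 1 \<Longrightarrow> shift (Suc k) (shift i t) = shift i (shift k t)"
  by (induct t arbitrary: i k) auto

lemma shift_subst [simp]: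
    "j < i + 1 \<Longrightarrow> shift i (subst t j s) = subst (shift (i + 1) t) j (shift i s)"
  by (induct t arbitrary: i j s)
    (auto simp add: diff_Suc subst.simps(1) shift_shift split: nat.split)

lemma shift_subst_lt:
    "i < j + 1 \<Longrightarrow> shift i (subst t j s) = subst (shift i t) (j + 1) (shift i s)"
  by (induct t arbitrary: i j s) (auto simp add: subst.simps(1) shift_shift)

lemma subst_shift [simp]:
    "subst (shift k t) k s = t"
  by (induct t arbitrary: k s) (simp_all add: subst.simps(1))

lemma subst_subst:
    "i < j + 1 \<Longrightarrow> subst (subst t (Suc j) (shift i v)) i (subst u j v) = subst (subst t i u) j v"
  by (induct t arbitrary: i j u v)
    (simp_all add: diff_Suc subst.simps(1) shift_shift [symmetric] shift_subst_lt
      split: nat.split)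

lemma subst_subst0:
  "subst (subst t (Suc k) (shift 0 v)) 0 (subst u k v) = subst (subst t 0 u) k v"
  using subst_subst[of 0 k t v u] by simp

lemma value_shift [simp]: "is_value (shift k V) = is_value V"
  by (cases V) auto

lemma value_subst: "is_value W \<Longrightarrow> is_value V \<Longrightarrow> is_value (subst W k V)"
  by (cases W) (auto simp: subst.simps(1))

fun occ :: "nat \<Rightarrow> tm \<Rightarrow> nat" where
  "occ j (Var i) = (if i = j then 1 else 0)"
| "occ j (Lam M) = occ (Suc j) M"
| "occ j (App M N) = occ j M + occ j N"
| "occ j (Choice M N) = occ j M + occ j N"

lemma occ_shift:
  "occ j (shift c V) = (if j < c then occ j V else if j = c then 0 else occ (j - 1) V)"
  by (induct V arbitrary: j c) auto

lemma occ_subst: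
  "occ j (subst A k V) = (if j < k then occ j A else occ (Suc j) A) + occ k A * occ j V"
proof (induct A arbitrary: j k V)
  case (Var i)
  then show ?case by (auto simp: subst.simps(1))
next
  case (Lam B)
  then show ?case by (simp add: occ_shift)
qed (auto simp: algebra_simps)

lemma occ0_subst_shift: "occ 0 (subst A (Suc k) (shift 0 V)) = occ 0 A"
  by (simp add: occ_subst occ_shift)



abbreviation bstar where "bstar \<equiv> beta\<^sup>*\<^sup>*"
abbreviation wstar where "wstar \<equiv> wbeta\<^sup>*\<^sup>*"

lemma bstar_Lam: "bstar M M' \<Longrightarrow> bstar (Lam M) (Lam M')"
  by (induct rule: rtranclp_induct) (auto intro: rtranclp.rtrancl_into_rtrancl beta.lam)
lemma bstar_AppL: "bstar M M' \<Longrightarrow> bstar (App M N) (App M' N)"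
  by (induct rule: rtranclp_induct) (auto intro: rtranclp.rtrancl_into_rtrancl beta.appL)
lemma bstar_AppR: "bstar N N' \<Longrightarrow> bstar (App M N) (App M N')"
  by (induct rule: rtranclp_induct) (auto intro: rtranclp.rtrancl_into_rtrancl beta.appR)
lemma bstar_ChL: "bstar M M' \<Longrightarrow> bstar (Choice M N) (Choice M' N)"
  by (induct rule: rtranclp_induct) (auto intro: rtranclp.rtrancl_into_rtrancl beta.chL)
lemma bstar_ChR: "bstar N N' \<Longrightarrow> bstar (Choice M N) (Choice M N')"
  by (induct rule: rtranclp_induct) (auto intro: rtranclp.rtrancl_into_rtrancl beta.chR)
lemma bstar_App: "bstar M M' \<Longrightarrow> bstar N N' \<Longrightarrow> bstar (App M N) (App M' N')"
  by (meson bstar_AppL bstar_AppR rtranclp_trans)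
lemma bstar_Ch: "bstar M M' \<Longrightarrow> bstar N N' \<Longrightarrow> bstar (Choice M N) (Choice M' N')"
  by (meson bstar_ChL bstar_ChR rtranclp_trans)

lemma wstar_AppL: "wstar M M' \<Longrightarrow> wstar (App M N) (App M' N)"
  by (induct rule: rtranclp_induct) (auto intro: rtranclp.rtrancl_into_rtrancl wbeta.appL)
lemma wstar_AppR: "wstar N N' \<Longrightarrow> wstar (App M N) (App M N')"
  by (induct rule: rtranclp_induct) (auto intro: rtranclp.rtrancl_into_rtrancl wbeta.appR)
lemma wstar_App: "wstar M M' \<Longrightarrow> wstar N N' \<Longrightarrow> wstar (App M N) (App M' N')"
  by (meson wstar_AppL wstar_AppR rtranclp_trans)

lemma wbeta_beta: "wbeta M N \<Longrightarrow> beta M N"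
  by (induct rule: wbeta.induct) (auto intro: beta.intros)

inductive pr :: "nat \<Rightarrow> tm \<Rightarrow> tm \<Rightarrow> bool" where
  pvar: "pr 0 (Var i) (Var i)"
| plam: "pr n M M' \<Longrightarrow> pr n (Lam M) (Lam M')"
| papp: "pr n M M' \<Longrightarrow> pr m N N' \<Longrightarrow> pr (n + m) (App M N) (App M' N')"
| pch: "pr n M M' \<Longrightarrow> pr m N N' \<Longrightarrow> pr (n + m) (Choice M N) (Choice M' N')"
| pbeta: "pr n M M' \<Longrightarrow> pr m V V' \<Longrightarrow> is_value V \<Longrightarrow>
          pr (n + occ 0 M' * m + 1) (App (Lam M) V) (subst M' 0 V')"

lemma pr_refl: "pr 0 M M"
proof (induct M)
  case (App M1 M2) then show ?case using pr.papp by fastforce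
next
  case (Choice M1 M2) then show ?case using pr.pch by fastforce
qed (auto intro: pr.intros)

lemma pr_value: "pr n V V' \<Longrightarrow> is_value V \<Longrightarrow> is_value V'"
  by (induct rule: pr.induct) auto

lemma pr_shift: "pr n M M' \<Longrightarrow> pr n (shift k M) (shift k M')"
proof (induct arbitrary: k rule: pr.induct)
  case (pbeta n M M' m V V')
  have "pr (n + occ 0 (shift (Suc k) M') * m + 1) (App (Lam (shift (Suc k) M)) (shift k V))
          (subst (shift (Suc k) M') 0 (shift k V'))"
    using pbeta by (intro pr.pbeta) auto
  moreover have "occ 0 (shift (Suc k) M') = occ 0 M'" by (simp add: occ_shift)
  ultimately show ?case by simp
qed (auto intro: pr.intros)

lemma pr_subst:
  "pr n M M' \<Longrightarrow> pr m V V' \<Longrightarrow> is_value V \<Longrightarrow>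
   \<exists>k \<le> n + occ j M' * m. pr k (subst M j V) (subst M' j V')"
proof (induct arbitrary: j m V V' rule: pr.induct)
  case (pvar i)
  then show ?case
    by (cases "i < j"; cases "i = j") (auto simp: subst.simps(1) intro: pr.pvar)
next
  case (plam n M M')
  from plam.prems have "pr m (shift 0 V) (shift 0 V')" "is_value (shift 0 V)"
    by (auto intro: pr_shift)
  with plam.hyps(2) obtain k where "k \<le> n + occ (Suc j) M' * m"
    "pr k (subst M (Suc j) (shift 0 V)) (subst M' (Suc j) (shift 0 V'))" by blast
  then show ?case by (auto intro: pr.plam)
next
  case (papp n M M' n2 N N')
  obtain k1 where "k1 \<le> n + occ j M' * m" "pr k1 (subst M j V) (subst M' j V')"
    using papp by blast
  moreover obtain k2 where "k2 \<le> n2 + occ j N' * m" "pr k2 (subst N j V) (subst N' j V')"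
    using papp by blast
  ultimately show ?case
    by (intro exI[of _ "k1 + k2"]) (auto intro: pr.papp simp: algebra_simps)
next
  case (pch n M M' n2 N N')
  obtain k1 where "k1 \<le> n + occ j M' * m" "pr k1 (subst M j V) (subst M' j V')"
    using pch by blast
  moreover obtain k2 where "k2 \<le> n2 + occ j N' * m" "pr k2 (subst N j V) (subst N' j V')"
    using pch by blast
  ultimately show ?case
    by (intro exI[of _ "k1 + k2"]) (auto intro: pr.pch simp: algebra_simps)
next
  case (pbeta n A A' m2 W W')
  from pbeta.prems have sh: "pr m (shift 0 V) (shift 0 V')" "is_value (shift 0 V)"
    by (auto intro: pr_shift)
  obtain a where a: "a \<le> n + occ (Suc j) A' * m"
    "pr a (subst A (Suc j) (shift 0 V)) (subst A' (Suc j) (shift 0 V'))"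
    using pbeta.hyps(2)[OF sh] by blast
  obtain b where b: "b \<le> m2 + occ j W' * m" "pr b (subst W j V) (subst W' j V')"
    using pbeta.hyps(4)[OF pbeta.prems] by blast
  have vW: "is_value (subst W j V)" using pbeta value_subst by blast
  have "pr (a + occ 0 (subst A' (Suc j) (shift 0 V')) * b + 1)
      (App (Lam (subst A (Suc j) (shift 0 V))) (subst W j V))
      (subst (subst A' (Suc j) (shift 0 V')) 0 (subst W' j V'))"
    by (rule pr.pbeta[OF a(2) b(2) vW])
  moreover have "subst (subst A' (Suc j) (shift 0 V')) 0 (subst W' j V') = subst (subst A' 0 W') j V'"
    by (rule subst_subst0)
  moreover have "occ 0 (subst A' (Suc j) (shift 0 V')) = occ 0 A'"
    by (rule occ0_subst_shift)
  moreover have "occ j (subst A' 0 W') = occ (Suc j) A' + occ 0 A' * occ j W'"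
    by (simp add: occ_subst)
  moreover have "a + occ 0 A' * b + 1 \<le> n + occ 0 A' * m2 + 1 + (occ (Suc j) A' + occ 0 A' * occ j W') * m"
  proof -
    have "occ 0 A' * b \<le> occ 0 A' * (m2 + occ j W' * m)" using b(1) by simp
    then show ?thesis using a(1) by (simp add: algebra_simps)
  qed
  ultimately show ?case by (intro exI[of _ "a + occ 0 A' * b + 1"]) simp
qed

lemma beta_pr: "beta M N \<Longrightarrow> \<exists>n. pr n M N"
proof (induct rule: beta.induct)
  case (base V M)
  show ?case using pr.pbeta[OF pr_refl pr_refl base] by blast
qed (auto intro: pr.intros pr_refl)

lemma pr_bstar: "pr n M N \<Longrightarrow> bstar M N"
proof (induct rule: pr.induct)
  case (pbeta n M M' m V V')
  have "bstar (App (Lam M) V) (App (Lam M') V')"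
    using pbeta by (intro bstar_App bstar_Lam)
  moreover have "beta (App (Lam M') V') (subst M' 0 V')"
    using pbeta pr_value by (auto intro: beta.base)
  ultimately show ?case by (rule rtranclp.rtrancl_into_rtrancl)
qed (auto intro: bstar_Lam bstar_App bstar_Ch)

inductive pri :: "tm \<Rightarrow> tm \<Rightarrow> bool" where
  ivar: "pri (Var i) (Var i)"
| ilam: "pr n M M' \<Longrightarrow> pri (Lam M) (Lam M')"
| iapp: "pri M M' \<Longrightarrow> pri N N' \<Longrightarrow> pri (App M N) (App M' N')"
| ich: "pr n M M' \<Longrightarrow> pr m N N' \<Longrightarrow> pri (Choice M N) (Choice M' N')"

lemma pri_pr: "pri M N \<Longrightarrow> \<exists>n. pr n M N"
  by (induct rule: pri.induct) (auto intro: pr.intros)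

lemma pri_value: "pri V V' \<Longrightarrow> is_value V' \<Longrightarrow> is_value V"
  by (induct rule: pri.induct) auto

lemma K1_aux:
  "\<forall>n' M N. pr n' M N \<longrightarrow> n' \<le> n \<longrightarrow> (\<exists>M'. wstar M M' \<and> pri M' N)"
proof (induct n rule: less_induct)
  case (less n)
  have "pr n' M N \<Longrightarrow> n' \<le> n \<Longrightarrow> \<exists>M'. wstar M M' \<and> pri M' N" for n' M N
  proof (induct M arbitrary: n' N)
    case (Var x)
    then show ?case by (auto elim: pr.cases intro: pri.intros)
  next
    case (Lam M)
    from Lam.prems(1) show ?case by (cases rule: pr.cases) (auto intro: pri.intros)
  next
    case (Choice M1 M2)
    from Choice.prems(1) show ?case by (cases rule: pr.cases) (auto intro: pri.intros)
  next
    case (App M1 M2)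
    from App.prems(1) show ?case
    proof (cases rule: pr.cases)
      case (papp n1 M1' n2 M2')
      obtain A where "wstar M1 A" "pri A M1'" using App papp by fastforce
      moreover obtain B where "wstar M2 B" "pri B M2'" using App papp by fastforce
      ultimately show ?thesis using papp by (auto intro: wstar_App pri.iapp)
    next
      case (pbeta n1 A A' m V')
      have "wbeta (App (Lam A) M2) (subst A 0 M2)" using pbeta by (auto intro: wbeta.base)
      moreover obtain k where "k \<le> n1 + occ 0 A' * m" "pr k (subst A 0 M2) (subst A' 0 V')"
        using pr_subst[of n1 A A' m M2 V' 0] pbeta by blast
      moreover have "k < n" using calculation pbeta App.prems by simp
      ultimately obtain M' where "wstar (subst A 0 M2) M'" "pri M' N"
        using less pbeta by blast
      then show ?thesis using pbeta \<open>wbeta _ _\<close>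
        by (auto intro: converse_rtranclp_into_rtranclp)
    qed
  qed
  then show ?case by blast
qed

lemma K1: "pr n M N \<Longrightarrow> \<exists>M'. wstar M M' \<and> pri M' N"
  using K1_aux by blast

lemma K2: "wbeta N L \<Longrightarrow> pri M N \<Longrightarrow> \<exists>M''. wbeta M M'' \<and> (\<exists>n. pr n M'' L)"
proof (induct arbitrary: M rule: wbeta.induct)
  case (base V N1)
  from base.prems obtain M1 M2 where M: "M = App M1 M2" "pri M1 (Lam N1)" "pri M2 V"
    by (auto elim: pri.cases)
  from M(2) obtain A n where A: "M1 = Lam A" "pr n A N1" by (auto elim: pri.cases)
  have vM2: "is_value M2" using M(3) base pri_value by blast
  obtain m where "pr m M2 V" using M(3) pri_pr by blast
  then obtain k where "pr k (subst A 0 M2) (subst N1 0 V)"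
    using pr_subst[OF A(2) _ vM2] by blast
  moreover have "wbeta M (subst A 0 M2)" using M A vM2 by (auto intro: wbeta.base)
  ultimately show ?case by blast
next
  case (appL N1 N1' Q)
  from appL.prems obtain M1 M2 where M: "M = App M1 M2" "pri M1 N1" "pri M2 Q"
    by (auto elim: pri.cases)
  obtain M1'' n where "wbeta M1 M1''" "pr n M1'' N1'" using appL M by blast
  moreover obtain m where "pr m M2 Q" using M pri_pr by blast
  ultimately show ?case using M by (auto intro: wbeta.appL pr.papp)
next
  case (appR N1 N1' Q)
  from appR.prems obtain M1 M2 where M: "M = App M2 M1" "pri M1 N1" "pri M2 Q"
    by (auto elim: pri.cases)
  obtain M1'' n where "wbeta M1 M1''" "pr n M1'' N1'" using appR M by blast
  moreover obtain m where "pr m M2 Q" using M pri_pr by blast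
  ultimately show ?case using M by (auto intro: wbeta.appR pr.papp)
qed

lemma K4: "wstar N L \<Longrightarrow> pri M N \<Longrightarrow> \<exists>M'. wstar M M' \<and> pri M' L"
proof (induct arbitrary: M rule: rtranclp_induct)
  case base
  then show ?case by blast
next
  case (step y z)
  obtain M1 where "wstar M M1" "pri M1 y" using step by blast
  moreover obtain M2 n where "wbeta M1 M2" "pr n M2 z" using K2 step calculation by blast
  moreover obtain M3 where "wstar M2 M3" "pri M3 z" using K1 calculation by blast
  ultimately show ?case by (meson converse_rtranclp_into_rtranclp rtranclp_trans)
qed

inductive P :: "tm \<Rightarrow> tm \<Rightarrow> bool" where
  qvar: "P (Var i) (Var i)"
| qlam: "bstar M M' \<Longrightarrow> P (Lam M) (Lam M')"
| qapp: "P M M' \<Longrightarrow> P N N' \<Longrightarrow> P (App M N) (App M' N')"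
| qch: "bstar M M' \<Longrightarrow> bstar N N' \<Longrightarrow> P (Choice M N) (Choice M' N')"

lemma P_refl: "P M M"
  by (induct M) (auto intro: P.intros)

lemma P_trans: "P M N \<Longrightarrow> P N L \<Longrightarrow> P M L"
proof (induct arbitrary: L rule: P.induct)
  case (qvar i) then show ?case by simp
next
  case (qlam M M')
  from qlam.prems show ?case by (cases rule: P.cases) (use qlam.hyps in \<open>auto intro: P.intros\<close>)
next
  case (qapp M M' N N')
  from qapp.prems show ?case by (cases rule: P.cases) (use qapp.hyps in \<open>auto intro: P.intros\<close>)
next
  case (qch M M' N N')
  from qch.prems show ?case by (cases rule: P.cases) (use qch.hyps in \<open>auto intro: P.intros\<close>)
qed

lemma pri_P: "pri M N \<Longrightarrow> P M N"
  by (induct rule: pri.induct) (auto intro: P.intros pr_bstar)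

lemma P_bstar: "P M N \<Longrightarrow> bstar M N"
  by (induct rule: P.induct) (auto intro: bstar_Lam bstar_App bstar_Ch)

lemma DF: "bstar X Y \<Longrightarrow> \<exists>X'. wstar X X' \<and> P X' Y"
proof (induct rule: converse_rtranclp_induct)
  case base
  then show ?case using P_refl by blast
next
  case (step X X1)
  obtain X1' where 1: "wstar X1 X1'" "P X1' Y" using step by blast
  obtain n where "pr n X X1" using beta_pr step by blast
  then obtain X0 where 2: "wstar X X0" "pri X0 X1" using K1 by blast
  obtain X0' where 3: "wstar X0 X0'" "pri X0' X1'" using K4[OF 1(1) 2(2)] by blast
  show ?case using 1 2 3 pri_P P_trans by (meson rtranclp_trans)
qed



lemma wnormal_simps [simp]:
  "wnormal (Var i)" "wnormal (Lam M)" "wnormal (Choice M N)"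
  "wnormal (App A B) \<longleftrightarrow> wnormal A \<and> wnormal B \<and> \<not> (\<exists>M. A = Lam M \<and> is_value B)"
  unfolding wnormal_def
  by (auto elim: wbeta.cases intro: wbeta.intros)

lemma P_Lam: "P X (Lam M') \<Longrightarrow> \<exists>M. X = Lam M \<and> bstar M M'"
  by (auto elim: P.cases)
lemma P_LamL: "P (Lam M) Y \<Longrightarrow> \<exists>M'. Y = Lam M' \<and> bstar M M'"
  by (auto elim: P.cases)
lemma P_value: "P X Y \<Longrightarrow> is_value X \<longleftrightarrow> is_value Y"
  by (induct rule: P.induct) auto

lemma P_wnormal: "P X Y \<Longrightarrow> wnormal X \<longleftrightarrow> wnormal Y"
proof (induct rule: P.induct)
  case (qapp M M' N N')
  have "(\<exists>A. M = Lam A) \<longleftrightarrow> (\<exists>A. M' = Lam A)"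
    using qapp(1) by (auto elim: P.cases)
  then show ?case using qapp P_value by auto
qed auto

lemma P_oplus_back: "oplus_ctx Y A' B' \<Longrightarrow> P X Y \<Longrightarrow>
   \<exists>A B. oplus_ctx X A B \<and> bstar A A' \<and> bstar B B'"
proof (induct arbitrary: X rule: oplus_ctx.induct)
  case (base M N)
  then show ?case by (auto elim!: P.cases intro: oplus_ctx.base)
next
  case (appL M A B Q)
  from appL.prems obtain X1 X2 where "X = App X1 X2" "P X1 M" "P X2 Q" by (auto elim: P.cases)
  moreover obtain A0 B0 where "oplus_ctx X1 A0 B0" "bstar A0 A" "bstar B0 B" using appL(2) calculation by blast
  ultimately show ?case
    by (intro exI[of _ "App A0 X2"] exI[of _ "App B0 X2"]) (auto intro: oplus_ctx.appL bstar_App P_bstar)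
next
  case (appR M A B Q)
  from appR.prems obtain X1 X2 where "X = App X1 X2" "P X2 M" "P X1 Q" by (auto elim: P.cases)
  moreover obtain A0 B0 where "oplus_ctx X2 A0 B0" "bstar A0 A" "bstar B0 B" using appR(2) calculation by blast
  ultimately show ?case
    by (intro exI[of _ "App X1 A0"] exI[of _ "App X1 B0"]) (auto intro: oplus_ctx.appR bstar_App P_bstar)
qed

lemma P_oplus_fwd: "oplus_ctx X A B \<Longrightarrow> P X Y \<Longrightarrow> \<exists>A' B'. oplus_ctx Y A' B'"
proof (induct arbitrary: Y rule: oplus_ctx.induct)
  case (base M N)
  then show ?case by (auto elim!: P.cases intro: oplus_ctx.base)
next
  case (appL M A B Q)
  from appL.prems obtain Y1 Y2 where "Y = App Y1 Y2" "P M Y1" by (auto elim: P.cases)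
  then show ?case using appL(2)[of Y1] by (auto intro: oplus_ctx.appL)
next
  case (appR M A B Q)
  from appR.prems obtain Y1 Y2 where "Y = App Y1 Y2" "P M Y2" by (auto elim: P.cases)
  then show ?case using appR(2)[of Y2] by (auto intro: oplus_ctx.appR)
qed

lemma surface_normal_iff:
  "surface_normal X \<longleftrightarrow> wnormal X \<and> \<not> (\<exists>A B. oplus_ctx X A B)"
  unfolding surface_normal_def sstep_def oplus_step_def wnormal_def by blast

lemma normal_iff:
  "normal X \<longleftrightarrow> (\<nexists>Y. beta X Y) \<and> \<not> (\<exists>A B. oplus_ctx X A B)"
  unfolding normal_def step_def oplus_step_def single_def by blast

lemma bnormal_wnormal: "\<nexists>Y. beta X Y \<Longrightarrow> wnormal X"
  unfolding wnormal_def using wbeta_beta by blast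

lemma normal_P_sn: "normal Y \<Longrightarrow> P X Y \<Longrightarrow> surface_normal X"
  unfolding surface_normal_iff normal_iff
  using P_wnormal bnormal_wnormal P_oplus_fwd by blast

lemma U_beta: "U X Y \<Longrightarrow> beta X Y"
  by (induct rule: U.induct) (auto intro: beta.intros wbeta_beta)

lemma U_wn: "U X Y \<Longrightarrow> wnormal X \<Longrightarrow> P X Y \<and> wnormal Y"
proof (induct rule: U.induct)
  case (weak M M')
  then show ?case unfolding wnormal_def by blast
next
  case (lam P1 P')
  then show ?case using U_beta by (auto intro!: P.qlam)
next
  case (appL P1 Q P')
  then have "P P1 P'" "wnormal P'" by auto
  moreover have "(\<exists>A. P1 = Lam A) \<longleftrightarrow> (\<exists>A. P' = Lam A)"
    using calculation(1) by (auto elim: P.cases)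
  ultimately show ?case using appL P_refl by (auto intro: P.qapp)
next
  case (appR P1 Q Q')
  then have "P Q Q'" "wnormal Q'" by auto
  moreover have "is_value Q \<longleftrightarrow> is_value Q'" using calculation(1) P_value by blast
  ultimately show ?case using appR P_refl by (auto intro: P.qapp)
next
  case (chL P1 Q P')
  then show ?case using U_beta by (auto intro!: P.qch)
next
  case (chR P1 Q Q')
  then show ?case using U_beta by (auto intro!: P.qch)
qed

abbreviation ustar where "ustar \<equiv> U\<^sup>*\<^sup>*"

lemma ustar_Lam: "ustar M M' \<Longrightarrow> ustar (Lam M) (Lam M')"
  by (induct rule: rtranclp_induct) (auto intro: rtranclp.rtrancl_into_rtrancl U.lam[OF wnormal_simps(2)])
lemma ustar_ChL: "ustar M M' \<Longrightarrow> ustar (Choice M N) (Choice M' N)"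
  by (induct rule: rtranclp_induct) (auto intro: rtranclp.rtrancl_into_rtrancl U.chL[OF wnormal_simps(3)])
lemma ustar_ChR: "ustar N N' \<Longrightarrow> ustar (Choice M N) (Choice M N')"
  by (induct rule: rtranclp_induct) (auto intro: rtranclp.rtrancl_into_rtrancl U.chR[OF wnormal_simps(3)])

lemma ustar_AppL: "ustar M M' \<Longrightarrow> wnormal (App M N) \<Longrightarrow> ustar (App M N) (App M' N) \<and> wnormal (App M' N)"
proof (induct rule: rtranclp_induct)
  case base then show ?case by simp
next
  case (step y z)
  then have 1: "ustar (App M N) (App y N)" "wnormal (App y N)" by auto
  have "U (App y N) (App z N)" using step 1 by (auto intro: U.appL)
  then show ?case using 1 U_wn by (meson rtranclp.rtrancl_into_rtrancl)
qed

lemma ustar_AppR: "ustar N N' \<Longrightarrow> wnormal (App M N) \<Longrightarrow> ustar (App M N) (App M N') \<and> wnormal (App M N')"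
proof (induct rule: rtranclp_induct)
  case base then show ?case by simp
next
  case (step y z)
  then have 1: "ustar (App M N) (App M y)" "wnormal (App M y)" by auto
  have "U (App M y) (App M z)" using step 1 by (auto intro: U.appR)
  then show ?case using 1 U_wn by (meson rtranclp.rtrancl_into_rtrancl)
qed

lemma wstar_ustar: "wstar X Y \<Longrightarrow> ustar X Y"
  by (induct rule: rtranclp_induct) (auto intro: rtranclp.rtrancl_into_rtrancl U.weak)

lemma C: "bstar X N \<Longrightarrow> \<nexists>Y. beta N Y \<Longrightarrow> ustar X N"
proof (induct N arbitrary: X)
  case (Var i)
  obtain X' where "wstar X X'" "P X' (Var i)" using DF Var by blast
  then show ?case by (auto elim: P.cases dest: wstar_ustar)
next
  case (Lam NB)
  obtain X' where X': "wstar X X'" "P X' (Lam NB)" using DF Lam by blast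
  then obtain B where "X' = Lam B" "bstar B NB" by (auto elim: P.cases)
  moreover have "\<nexists>Y. beta NB Y" using Lam.prems beta.lam by blast
  ultimately show ?case using Lam X' by (meson rtranclp_trans ustar_Lam wstar_ustar)
next
  case (App N1 N2)
  obtain X' where X': "wstar X X'" "P X' (App N1 N2)" using DF App by blast
  then obtain M1 M2 where M: "X' = App M1 M2" "P M1 N1" "P M2 N2" by (auto elim: P.cases)
  have wn: "wnormal X'" using X' P_wnormal bnormal_wnormal App.prems by blast
  have "\<nexists>Y. beta N1 Y" "\<nexists>Y. beta N2 Y" using App.prems beta.appL beta.appR by blast+
  then have u: "ustar M1 N1" "ustar M2 N2" using App M P_bstar by blast+
  have 1: "ustar X' (App N1 M2)" "wnormal (App N1 M2)" using ustar_AppL[OF u(1)] wn M by auto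
  have 2: "ustar (App N1 M2) (App N1 N2)" using ustar_AppR[OF u(2) 1(2)] by auto
  show ?case using X'(1) 1 2 by (meson rtranclp_trans wstar_ustar)
next
  case (Choice N1 N2)
  obtain X' where X': "wstar X X'" "P X' (Choice N1 N2)" using DF Choice by blast
  then obtain M1 M2 where M: "X' = Choice M1 M2" "bstar M1 N1" "bstar M2 N2" by (auto elim: P.cases)
  have "\<nexists>Y. beta N1 Y" "\<nexists>Y. beta N2 Y" using Choice.prems beta.chL beta.chR by blast+
  then have u: "ustar M1 N1" "ustar M2 N2" using Choice M by blast+
  show ?case using X'(1) M u
    by (meson rtranclp_trans wstar_ustar ustar_ChL ustar_ChR)
qed

lemma sn_U: "surface_normal Z \<Longrightarrow> U Z Z' \<Longrightarrow> surface_normal Z'"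
  unfolding surface_normal_iff using U_wn P_oplus_back by blast

lemma E_wbeta: "wbeta Z Z' \<Longrightarrow> E_step Z (single Z')"
  unfolding E_step_def surface_normal_def sstep_def by blast
lemma E_oplus: "oplus_ctx Z A B \<Longrightarrow> E_step Z {#(1/2,A),(1/2,B)#}"
  unfolding E_step_def surface_normal_def sstep_def oplus_step_def by blast
lemma E_U: "surface_normal Z \<Longrightarrow> U Z Z' \<Longrightarrow> E_step Z (single Z')"
  unfolding E_step_def by blast

lemma E_step_step: "E_step M m \<Longrightarrow> step M m"
  unfolding E_step_def step_def sstep_def using wbeta_beta U_beta by blast



lemma scale_empty [simp]: "scale q {#} = {#}"
  by (simp add: scale_def)
lemma scale_add_mset [simp]: "scale q (add_mset (p, M) a) = add_mset (q * p, M) (scale q a)"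
  by (simp add: scale_def)
lemma scale_plus [simp]: "scale q (a + b) = scale q a + scale q b"
  by (simp add: scale_def)
lemma scale_scale [simp]: "scale q (scale p a) = scale (q * p) a"
  by (induct a) (auto simp: scale_def)
lemma scale_one [simp]: "scale 1 a = a"
  by (induct a) (auto simp: scale_def)
lemma scale_single [simp]: "scale q (single M) = {#(q, M)#}"
  by (simp add: scale_def single_def)
lemma scale_sum_mset: "scale q (sum_mset (image_mset f C)) = sum_mset (image_mset (\<lambda>y. scale q (f y)) C)"
  by (induct C) auto

subsection \<open>Generic lifting via multisets of pairs\<close>

definition LiftR :: "(tm \<Rightarrow> mdist \<Rightarrow> bool) \<Rightarrow> mdist \<Rightarrow> mdist \<Rightarrow> bool" where
  "LiftR R a b \<longleftrightarrow> (\<exists>C. image_mset fst C = a \<and> (\<forall>y\<in>#C. R (snd (fst y)) (snd y)) \<and>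
     b = sum_mset (image_mset (\<lambda>y. scale (fst (fst y)) (snd y)) C))"

definition refl_or :: "(tm \<Rightarrow> mdist \<Rightarrow> bool) \<Rightarrow> tm \<Rightarrow> mdist \<Rightarrow> bool" where
  "refl_or r M m \<longleftrightarrow> m = single M \<or> r M m"

lemma LiftR_empty [simp]: "LiftR R {#} b \<longleftrightarrow> b = {#}"
  unfolding LiftR_def by auto

lemma LiftR_add_mset:
  "LiftR R (add_mset (p, M) a) c \<longleftrightarrow> (\<exists>m b. R M m \<and> LiftR R a b \<and> c = scale p m + b)"
proof
  assume "LiftR R (add_mset (p, M) a) c"
  then obtain C where C: "image_mset fst C = add_mset (p, M) a" "\<forall>y\<in>#C. R (snd (fst y)) (snd y)"
     "c = sum_mset (image_mset (\<lambda>y. scale (fst (fst y)) (snd y)) C)"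
    unfolding LiftR_def by blast
  have "(p, M) \<in># image_mset fst C" using C(1) by simp
  then obtain y where y: "y \<in># C" "fst y = (p, M)" by auto
  define C' where "C' = C - {#y#}"
  have CC: "C = add_mset y C'" using y C'_def by simp
  have "LiftR R a (sum_mset (image_mset (\<lambda>y. scale (fst (fst y)) (snd y)) C'))"
    unfolding LiftR_def using C CC y by (intro exI[of _ C']) auto
  then show "\<exists>m b. R M m \<and> LiftR R a b \<and> c = scale p m + b"
    using C CC y by (intro exI[of _ "snd y"] exI[of _ "sum_mset (image_mset (\<lambda>y. scale (fst (fst y)) (snd y)) C')"]) auto
next
  assume "\<exists>m b. R M m \<and> LiftR R a b \<and> c = scale p m + b"
  then obtain m b C where "R M m" "c = scale p m + b" "image_mset fst C = a"
    "\<forall>y\<in>#C. R (snd (fst y)) (snd y)" "b = sum_mset (image_mset (\<lambda>y. scale (fst (fst y)) (snd y)) C)"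
    unfolding LiftR_def by blast
  then show "LiftR R (add_mset (p, M) a) c"
    unfolding LiftR_def by (intro exI[of _ "add_mset ((p, M), m) C"]) auto
qed

lemma LiftR_plus: "LiftR R a b \<Longrightarrow> LiftR R a' b' \<Longrightarrow> LiftR R (a + a') (b + b')"
proof (induct a arbitrary: b)
  case empty then show ?case by simp
next
  case (add x a)
  obtain p M where x: "x = (p, M)" by force
  from add.prems(1) obtain m b0 where "R M m" "LiftR R a b0" "b = scale p m + b0"
    unfolding x LiftR_add_mset by blast
  then show ?case using add x by (auto simp: LiftR_add_mset add.assoc)
qed

lemma LiftR_split: "LiftR R (a + a') c \<Longrightarrow> \<exists>b b'. c = b + b' \<and> LiftR R a b \<and> LiftR R a' b'"
proof (induct a arbitrary: c)
  case empty then show ?case by (intro exI[of _ "{#}"] exI[of _ c]) simp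
next
  case (add x a)
  obtain p M where x: "x = (p, M)" by force
  from add.prems obtain m b0 where 1: "R M m" "LiftR R (a + a') b0" "c = scale p m + b0"
    unfolding x by (auto simp: LiftR_add_mset)
  then obtain b b' where "b0 = b + b'" "LiftR R a b" "LiftR R a' b'" using add by blast
  then show ?case using 1 x
    by (intro exI[of _ "scale p m + b"] exI[of _ b']) (auto simp: LiftR_add_mset add.assoc)
qed

lemma LiftR_scale: "LiftR R a b \<Longrightarrow> LiftR R (scale q a) (scale q b)"
proof (induct a arbitrary: b)
  case empty then show ?case by simp
next
  case (add x a)
  obtain p M where x: "x = (p, M)" by force
  from add.prems obtain m b0 where "R M m" "LiftR R a b0" "b = scale p m + b0"
    unfolding x LiftR_add_mset by blast
  then show ?case using add x by (auto simp: LiftR_add_mset)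
qed

lemma LiftR_unscale: "LiftR R (scale q a) c \<Longrightarrow> \<exists>b. c = scale q b \<and> LiftR R a b"
proof (induct a arbitrary: c)
  case empty then show ?case by (intro exI[of _ "{#}"]) simp
next
  case (add x a)
  obtain p M where x: "x = (p, M)" by force
  from add.prems obtain m b0 where 1: "R M m" "LiftR R (scale q a) b0" "c = scale (q * p) m + b0"
    unfolding x by (auto simp: LiftR_add_mset)
  then obtain b where "b0 = scale q b" "LiftR R a b" using add by blast
  then show ?case using 1 x
    by (intro exI[of _ "scale p m + b"]) (auto simp: LiftR_add_mset)
qed

lemma LiftR_single: "LiftR R (single M) m \<longleftrightarrow> R M m"
  unfolding single_def by (auto simp: LiftR_add_mset)

lemma LiftR_refl: "(\<And>M. R M (single M)) \<Longrightarrow> LiftR R a a"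
proof (induct a)
  case empty then show ?case by simp
next
  case (add x a)
  obtain p M where x: "x = (p, M)" by force
  have "LiftR R (add_mset (p, M) a) (scale p (single M) + a)"
    by (subst LiftR_add_mset) (use add in blast)
  then show ?case using x by (simp add: single_def)
qed

lemma LiftR_mono: "LiftR R a b \<Longrightarrow> (\<And>M m. R M m \<Longrightarrow> R' M m) \<Longrightarrow> LiftR R' a b"
  unfolding LiftR_def by blast

lemma LiftR_comp:
  "LiftR R1 a b \<Longrightarrow> LiftR R2 b c \<Longrightarrow> LiftR (\<lambda>M m. \<exists>m1. R1 M m1 \<and> LiftR R2 m1 m) a c"
proof (induct a arbitrary: b c)
  case empty then show ?case by simp
next
  case (add x a)
  obtain p M where x: "x = (p, M)" by force
  from add.prems(1) obtain m b0 where 1: "R1 M m" "LiftR R1 a b0" "b = scale p m + b0"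
    unfolding x LiftR_add_mset by blast
  from add.prems(2) 1 obtain c1 c2 where 2: "c = c1 + c2" "LiftR R2 (scale p m) c1" "LiftR R2 b0 c2"
    using LiftR_split by blast
  from 2 obtain c1' where "c1 = scale p c1'" "LiftR R2 m c1'" using LiftR_unscale by blast
  then show ?case using 1 2 add x by (auto simp: LiftR_add_mset)
qed

lemma lift_to_LiftR: "lift r a b \<Longrightarrow> LiftR (refl_or r) a b"
proof (induct rule: lift.induct)
  case (refl M)
  then show ?case by (simp add: LiftR_single refl_or_def)
next
  case (one M m)
  then show ?case by (simp add: LiftR_single refl_or_def)
next
  case (sum ps ms)
  then show ?case
  proof (induct ps arbitrary: ms)
    case Nil then show ?case by simp
  next
    case (Cons x ps)
    then obtain m ms' where ms: "ms = m # ms'" "LiftR (refl_or r) (single (snd x)) m"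
      "list_all2 (\<lambda>x m. lift r (single (snd x)) m \<and> LiftR (refl_or r) (single (snd x)) m) ps ms'"
      by (cases ms) auto
    have "LiftR (refl_or r) (mset ps) (sum_list (map2 (\<lambda>x m. scale (fst x) m) ps ms'))"
      using Cons ms by blast
    then show ?case using ms(2) by (cases x) (auto simp: ms(1) LiftR_single LiftR_add_mset)
  qed
qed

lemma LiftR_to_lift: "LiftR (refl_or r) a b \<Longrightarrow> lift r a b"
proof -
  assume "LiftR (refl_or r) a b"
  then obtain C where C: "image_mset fst C = a" "\<forall>y\<in>#C. refl_or r (snd (fst y)) (snd y)"
    "b = sum_mset (image_mset (\<lambda>y. scale (fst (fst y)) (snd y)) C)"
    unfolding LiftR_def by blast
  obtain cs where cs: "mset cs = C" using ex_mset by blast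
  have "list_all2 (\<lambda>x m. lift r (single (snd x)) m) (map fst cs) (map snd cs)"
    unfolding list_all2_map1 list_all2_map2 list.rel_refl
  proof (rule list.rel_refl_strong)
    fix y assume "y \<in> set cs"
    then have "refl_or r (snd (fst y)) (snd y)" using C cs by auto
    then show "lift r (single (snd (fst y))) (snd y)"
      unfolding refl_or_def by (auto intro: lift.intros)
  qed
  then have "lift r (mset (map fst cs)) (sum_list (map2 (\<lambda>x m. scale (fst x) m) (map fst cs) (map snd cs)))"
    by (rule lift.sum)
  moreover have "mset (map fst cs) = a" using C cs by simp
  moreover have "sum_list (map2 (\<lambda>x m. scale (fst x) m) (map fst cs) (map snd cs)) = b"
  proof -
    have "sum_list (map2 (\<lambda>x m. scale (fst x) m) (map fst cs) (map snd cs))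
       = sum_list (map (\<lambda>y. scale (fst (fst y)) (snd y)) cs)"
      by (simp add: zip_map_fst_snd case_prod_unfold)
    also have "\<dots> = sum_mset (image_mset (\<lambda>y. scale (fst (fst y)) (snd y)) (mset cs))"
      by (simp flip: sum_mset_sum_list)
    also have "\<dots> = b" using C cs by simp
    finally show ?thesis .
  qed
  ultimately show ?thesis by simp
qed

lemma lift_iff: "lift r a b \<longleftrightarrow> LiftR (refl_or r) a b"
  using lift_to_LiftR LiftR_to_lift by blast



abbreviation LR where "LR r \<equiv> LiftR (refl_or r)"

lemma obs_empty [simp]: "obs_Nnf {#} N = 0"
  by (simp add: obs_Nnf_def)
lemma obs_add_mset [simp]:
  "obs_Nnf (add_mset (p, M) a) N = (if normal N \<and> M = N then p else 0) + obs_Nnf a N"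
  by (simp add: obs_Nnf_def)
lemma obs_plus [simp]: "obs_Nnf (a + b) N = obs_Nnf a N + obs_Nnf b N"
  by (simp add: obs_Nnf_def)
lemma obs_scale [simp]: "obs_Nnf (scale q a) N = q * obs_Nnf a N"
proof (induct a)
  case (add x a) then show ?case by (cases x) (auto simp: algebra_simps)
qed simp
lemma obs_single: "obs_Nnf (single M) N = (if normal N \<and> M = N then 1 else 0)"
  by (simp add: single_def)

definition nonneg :: "mdist \<Rightarrow> bool" where
  "nonneg a \<longleftrightarrow> (\<forall>x\<in>#a. 0 \<le> fst x)"

lemma nonneg_plus [simp]: "nonneg (a + b) \<longleftrightarrow> nonneg a \<and> nonneg b"
  by (auto simp: nonneg_def)
lemma nonneg_add_mset [simp]: "nonneg (add_mset (p, M) a) \<longleftrightarrow> 0 \<le> p \<and> nonneg a"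
  by (auto simp: nonneg_def)
lemma nonneg_empty [simp]: "nonneg {#}"
  by (auto simp: nonneg_def)
lemma nonneg_scale: "0 \<le> q \<Longrightarrow> nonneg a \<Longrightarrow> nonneg (scale q a)"
  by (induct a) (auto simp: nonneg_def)
lemma nonneg_single [simp]: "nonneg (single M)"
  by (simp add: single_def)

lemma nonneg_obs: "nonneg a \<Longrightarrow> 0 \<le> obs_Nnf a N"
proof (induct a)
  case (add x a) then show ?case by (cases x) auto
qed simp

lemma step_nonneg: "step M m \<Longrightarrow> nonneg m"
  unfolding step_def oplus_step_def by auto

lemma LRS_nonneg: "LR step a b \<Longrightarrow> nonneg a \<Longrightarrow> nonneg b"
proof (induct a arbitrary: b)
  case empty then show ?case by simp
next
  case (add x a)
  obtain p M where x: "x = (p, M)" by force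
  from add.prems obtain m b0 where 1: "refl_or step M m" "LR step a b0" "b = scale p m + b0"
    unfolding x LiftR_add_mset by blast
  have "nonneg a" "0 \<le> p" using add.prems x by auto
  then have "nonneg b0" using add.hyps 1(2) by blast
  moreover have "nonneg m" using 1(1) step_nonneg unfolding refl_or_def by auto
  ultimately show ?case using 1(3) \<open>0 \<le> p\<close> nonneg_scale by simp
qed

lemma LRS_obs: "LR step a b \<Longrightarrow> nonneg a \<Longrightarrow> obs_Nnf a N \<le> obs_Nnf b N"
proof (induct a arbitrary: b)
  case empty then show ?case by simp
next
  case (add x a)
  obtain p M where x: "x = (p, M)" by force
  from add.prems obtain m b0 where 1: "refl_or step M m" "LR step a b0" "b = scale p m + b0"
    unfolding x LiftR_add_mset by blast
  have IH: "obs_Nnf a N \<le> obs_Nnf b0 N" using add 1 x by auto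
  have p: "0 \<le> p" using add.prems x by auto
  show ?case
  proof (cases "m = single M")
    case True
    then show ?thesis using 1 IH x by (simp add: single_def)
  next
    case False
    then have st: "step M m" using 1 refl_or_def by blast
    then have "\<not> normal M" unfolding normal_def by blast
    moreover have "0 \<le> p * obs_Nnf m N" using p nonneg_obs step_nonneg st by simp
    ultimately show ?thesis using 1 IH x by auto
  qed
qed

lemma LRSs_nonneg: "(LR step)\<^sup>*\<^sup>* a b \<Longrightarrow> nonneg a \<Longrightarrow> nonneg b"
  by (induct rule: rtranclp_induct) (auto intro: LRS_nonneg)

lemma LRSs_obs: "(LR step)\<^sup>*\<^sup>* a b \<Longrightarrow> nonneg a \<Longrightarrow> obs_Nnf a N \<le> obs_Nnf b N"
proof (induct rule: rtranclp_induct)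
  case (step y z)
  then show ?case using LRSs_nonneg LRS_obs by (meson order_trans)
qed simp

lemma LR_refl: "LR r a a"
  by (rule LiftR_refl) (simp add: refl_or_def)

lemma LRs_plus: "(LR r)\<^sup>*\<^sup>* a b \<Longrightarrow> (LR r)\<^sup>*\<^sup>* a' b' \<Longrightarrow> (LR r)\<^sup>*\<^sup>* (a + a') (b + b')"
proof -
  assume 1: "(LR r)\<^sup>*\<^sup>* a b" and 2: "(LR r)\<^sup>*\<^sup>* a' b'"
  have "(LR r)\<^sup>*\<^sup>* (a + a') (b + a')" using 1
    by (induct rule: rtranclp_induct) (auto intro: rtranclp.rtrancl_into_rtrancl LiftR_plus LR_refl)
  moreover have "(LR r)\<^sup>*\<^sup>* (b + a') (b + b')" using 2
    by (induct rule: rtranclp_induct) (auto intro: rtranclp.rtrancl_into_rtrancl LiftR_plus LR_refl)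
  ultimately show ?thesis by simp
qed

lemma LRs_scale: "(LR r)\<^sup>*\<^sup>* a b \<Longrightarrow> (LR r)\<^sup>*\<^sup>* (scale q a) (scale q b)"
  by (induct rule: rtranclp_induct) (auto intro: rtranclp.rtrancl_into_rtrancl LiftR_scale)

lemma LiftR_chain:
  assumes "\<And>M m. R M m \<Longrightarrow> (LR r)\<^sup>*\<^sup>* (single M) m"
  shows "LiftR R a b \<Longrightarrow> (LR r)\<^sup>*\<^sup>* a b"
proof (induct a arbitrary: b)
  case empty then show ?case by simp
next
  case (add x a)
  obtain p M where x: "x = (p, M)" by force
  from add.prems obtain m b0 where 1: "R M m" "LiftR R a b0" "b = scale p m + b0"
    unfolding x LiftR_add_mset by blast
  have "(LR r)\<^sup>*\<^sup>* (scale p (single M)) (scale p m)" using assms 1 LRs_scale by blast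
  then have "(LR r)\<^sup>*\<^sup>* (scale p (single M) + a) (scale p m + b0)"
    using add 1 LRs_plus by blast
  then show ?case using x 1 by simp
qed

lemma LR_mono: "LR r a b \<Longrightarrow> (\<And>M m. r M m \<Longrightarrow> r' M m) \<Longrightarrow> LR r' a b"
  by (erule LiftR_mono) (auto simp: refl_or_def)

lemma LRs_mono: "(LR r)\<^sup>*\<^sup>* a b \<Longrightarrow> (\<And>M m. r M m \<Longrightarrow> r' M m) \<Longrightarrow> (LR r')\<^sup>*\<^sup>* a b"
  by (induct rule: rtranclp_induct) (auto intro: rtranclp.rtrancl_into_rtrancl LR_mono)

subsection \<open>Derivation trees\<close>

inductive ReachS :: "tm \<Rightarrow> mdist \<Rightarrow> bool" where
  rs0: "ReachS X (single X)"
| rsb: "beta X Y \<Longrightarrow> ReachS Y s \<Longrightarrow> ReachS X s"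
| rso: "oplus_ctx X A B \<Longrightarrow> ReachS A sA \<Longrightarrow> ReachS B sB \<Longrightarrow>
        ReachS X (scale (1/2) sA + scale (1/2) sB)"

lemma ReachS_ext: "ReachS X s \<Longrightarrow> LR step s s' \<Longrightarrow> ReachS X s'"
proof (induct arbitrary: s' rule: ReachS.induct)
  case (rs0 X)
  then have "refl_or step X s'" by (simp add: LiftR_single)
  then show ?case
  proof (unfold refl_or_def step_def oplus_step_def, elim disjE exE conjE)
    assume "s' = single X" then show ?thesis by (simp add: ReachS.rs0)
  next
    fix Y assume "beta X Y" "s' = single Y"
    then show ?thesis by (auto intro: ReachS.intros)
  next
    fix A B assume "oplus_ctx X A B" "s' = {#(1/2, A), (1/2, B)#}"
    moreover have "ReachS X (scale (1/2) (single A) + scale (1/2) (single B))"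
      by (rule ReachS.rso[OF \<open>oplus_ctx X A B\<close> ReachS.rs0 ReachS.rs0])
    ultimately show ?thesis by (simp add: single_def add_mset_commute)
  qed
next
  case (rsb X Y s)
  then show ?case by (auto intro: ReachS.intros)
next
  case (rso X A B sA sB)
  from rso.prems obtain c1 c2 where c: "s' = c1 + c2" "LR step (scale (1/2) sA) c1" "LR step (scale (1/2) sB) c2"
    using LiftR_split by blast
  obtain c1' where "c1 = scale (1/2) c1'" "LR step sA c1'" using c LiftR_unscale by blast
  moreover obtain c2' where "c2 = scale (1/2) c2'" "LR step sB c2'" using c LiftR_unscale by blast
  ultimately show ?case using rso c by (auto intro: ReachS.rso)
qed

lemma chain_ReachS: "(LR step)\<^sup>*\<^sup>* m s \<Longrightarrow> LiftR ReachS m s"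
proof (induct rule: rtranclp_induct)
  case base
  then show ?case by (rule LiftR_refl) (rule ReachS.rs0)
next
  case (step y z)
  have "LiftR (\<lambda>M m. \<exists>m1. ReachS M m1 \<and> LR step m1 m) m z"
    using LiftR_comp step by blast
  then show ?case by (rule LiftR_mono) (auto intro: ReachS_ext)
qed

inductive RE :: "tm \<Rightarrow> mdist \<Rightarrow> bool" where
  re0: "RE X (single X)"
| re1: "E_step X (single Y) \<Longrightarrow> RE Y v \<Longrightarrow> RE X v"
| re2: "E_step X {#(1/2, A), (1/2, B)#} \<Longrightarrow> RE A va \<Longrightarrow> RE B vb \<Longrightarrow>
        RE X (scale (1/2) va + scale (1/2) vb)"

lemma RE_chain: "RE X v \<Longrightarrow> (LR E_step)\<^sup>*\<^sup>* (single X) v"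
proof (induct rule: RE.induct)
  case (re0 X) then show ?case by simp
next
  case (re1 X Y v)
  have "LR E_step (single X) (single Y)" using re1 by (simp add: LiftR_single refl_or_def)
  then show ?case using re1 by (meson converse_rtranclp_into_rtranclp)
next
  case (re2 X A B va vb)
  have "LR E_step (single X) {#(1/2, A), (1/2, B)#}" using re2 by (simp add: LiftR_single refl_or_def)
  moreover have "{#(1/2, A), (1/2, B)#} = scale (1/2) (single A) + scale (1/2) (single B)"
    by (simp add: single_def)
  moreover have "(LR E_step)\<^sup>*\<^sup>* (scale (1/2) (single A) + scale (1/2) (single B)) (scale (1/2) va + scale (1/2) vb)"
    using re2 by (intro LRs_plus LRs_scale)
  ultimately show ?case by (metis converse_rtranclp_into_rtranclp)
qed

lemma RE_wstar: "wstar X X' \<Longrightarrow> RE X' v \<Longrightarrow> RE X v"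
  by (induct rule: converse_rtranclp_induct) (auto intro: RE.re1 E_wbeta)

lemma RE_ustar: "ustar X N \<Longrightarrow> surface_normal X \<Longrightarrow> RE N v \<Longrightarrow> RE X v"
proof (induct rule: converse_rtranclp_induct)
  case base then show ?case by simp
next
  case (step X Y)
  then show ?case using sn_U E_U RE.re1 by blast
qed

definition Q :: "real \<times> tm \<Rightarrow> real \<times> tm \<Rightarrow> bool" where
  "Q x y \<longleftrightarrow> fst x = fst y \<and> bstar (snd x) (snd y) \<and> (normal (snd y) \<longrightarrow> snd x = snd y)"

inductive RelM :: "(real \<times> tm \<Rightarrow> real \<times> tm \<Rightarrow> bool) \<Rightarrow> mdist \<Rightarrow> mdist \<Rightarrow> bool" for R where
  Zero: "RelM R {#} {#}"
| Plus: "R x y \<Longrightarrow> RelM R a b \<Longrightarrow> RelM R (add_mset x a) (add_mset y b)"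

lemma RelM_plus: "RelM R A B \<Longrightarrow> RelM R C D \<Longrightarrow> RelM R (A + C) (B + D)"
  by (induct rule: RelM.induct) (auto intro: RelM.Plus)

lemma rel_Q_scale: "RelM Q a b \<Longrightarrow> RelM Q (scale q a) (scale q b)"
proof (induct rule: RelM.induct)
  case Zero then show ?case by (simp add: RelM.Zero)
next
  case (Plus x y a b)
  then show ?case by (cases x; cases y) (auto intro!: RelM.Plus simp: Q_def)
qed

lemma rel_Q_single: "bstar V S \<Longrightarrow> (normal S \<longrightarrow> V = S) \<Longrightarrow> RelM Q (single V) (single S)"
  unfolding single_def by (auto intro!: RelM.Plus RelM.Zero simp: Q_def)

lemma F: "ReachS X1 s \<Longrightarrow> bstar X X1 \<Longrightarrow> \<exists>v. RE X v \<and> RelM Q v s"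
proof (induct arbitrary: X rule: ReachS.induct)
  case (rs0 X1)
  obtain X' where X': "wstar X X'" "P X' X1" using DF rs0 by blast
  show ?case
  proof (cases "normal X1")
    case True
    have sn: "surface_normal X'" using normal_P_sn True X' by blast
    have "\<nexists>Y. beta X1 Y" using True normal_iff by blast
    then have "ustar X' X1" using C X' P_bstar by blast
    then have "RE X' (single X1)" using RE_ustar sn RE.re0 by blast
    then have "RE X (single X1)" using RE_wstar X' by blast
    then show ?thesis using rel_Q_single[of X1 X1] by blast
  next
    case False
    have "RE X (single X')" using RE_wstar X' RE.re0 by blast
    then show ?thesis using rel_Q_single[of X' X1] False X' P_bstar by blast
  qed
next
  case (rsb X1 Y s)
  then show ?case by (meson rtranclp.rtrancl_into_rtrancl)
next
  case (rso X1 A1 B1 sA sB)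
  obtain X' where X': "wstar X X'" "P X' X1" using DF rso by blast
  obtain A B where AB: "oplus_ctx X' A B" "bstar A A1" "bstar B B1"
    using P_oplus_back rso X' by blast
  obtain va where va: "RE A va" "RelM Q va sA" using rso AB by blast
  obtain vb where vb: "RE B vb" "RelM Q vb sB" using rso AB by blast
  have "RE X' (scale (1/2) va + scale (1/2) vb)"
    using AB va vb by (intro RE.re2 E_oplus)
  then have "RE X (scale (1/2) va + scale (1/2) vb)" using RE_wstar X' by blast
  moreover have "RelM Q (scale (1/2) va + scale (1/2) vb) (scale (1/2) sA + scale (1/2) sB)"
    using va vb by (intro RelM_plus rel_Q_scale)
  ultimately show ?case by blast
qed

lemma Key_aux: "LiftR ReachS m s \<Longrightarrow> \<exists>u. (LR E_step)\<^sup>*\<^sup>* m u \<and> RelM Q u s"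
proof (induct m arbitrary: s)
  case empty then show ?case using RelM.Zero by auto
next
  case (add x a)
  obtain p X where x: "x = (p, X)" by force
  from add.prems obtain sX s0 where 1: "ReachS X sX" "LiftR ReachS a s0" "s = scale p sX + s0"
    unfolding x LiftR_add_mset by blast
  obtain v where v: "RE X v" "RelM Q v sX" using F 1 by blast
  obtain u0 where u0: "(LR E_step)\<^sup>*\<^sup>* a u0" "RelM Q u0 s0" using add 1 by blast
  have "(LR E_step)\<^sup>*\<^sup>* (scale p (single X) + a) (scale p v + u0)"
    using RE_chain v u0 by (intro LRs_plus LRs_scale)
  moreover have "RelM Q (scale p v + u0) s" using 1 v u0 by (auto intro: RelM_plus rel_Q_scale)
  ultimately show ?case using x by (intro exI[of _ "scale p v + u0"]) simp
qed

lemma bstar_chain: "bstar V S \<Longrightarrow> (LR step)\<^sup>*\<^sup>* {#(p, V)#} {#(p, S)#}"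
proof (induct rule: rtranclp_induct)
  case (step y z)
  have "LR step {#(p, y)#} (scale p (single z))"
    using step by (auto simp: LiftR_add_mset refl_or_def step_def intro!: exI[of _ "single z"])
  then show ?case using step by simp
qed simp

lemma rel_Q_chain: "RelM Q u s \<Longrightarrow> (LR step)\<^sup>*\<^sup>* u s"
proof (induct rule: RelM.induct)
  case Zero then show ?case by simp
next
  case (Plus x y a b)
  then have "(LR step)\<^sup>*\<^sup>* {#x#} {#y#}" using bstar_chain[of "snd x" "snd y" "fst x"]
    by (cases x; cases y) (auto simp: Q_def)
  then show ?case using Plus LRs_plus[of step "{#x#}" "{#y#}" a b] by simp
qed

lemma rel_Q_obs: "RelM Q u s \<Longrightarrow> obs_Nnf u N = obs_Nnf s N"
proof (induct rule: RelM.induct)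
  case Zero then show ?case by simp
next
  case (Plus x y a b)
  obtain p V q S where xy: "x = (p, V)" "y = (q, S)" by force
  have "p = q" "bstar V S" "normal S \<longrightarrow> V = S" using Plus xy by (auto simp: Q_def)
  moreover have "normal V \<Longrightarrow> V = S"
    using \<open>bstar V S\<close> by (cases rule: converse_rtranclpE) (auto simp: normal_iff)
  ultimately show ?case using Plus xy by auto
qed

lemma Key:
  assumes "(LR step)\<^sup>*\<^sup>* m s"
  shows "\<exists>u. (LR E_step)\<^sup>*\<^sup>* m u \<and> (LR step)\<^sup>*\<^sup>* u s \<and> (\<forall>N. obs_Nnf s N \<le> obs_Nnf u N)"
  using Key_aux[OF chain_ReachS[OF assms]] rel_Q_chain rel_Q_obs by (metis order_refl)



lemma SUP_eq_real:
  fixes f g :: "nat \<Rightarrow> real"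
  assumes "\<forall>i. \<exists>n. f i \<le> g n" "\<forall>n. \<exists>i. g n \<le> f i"
  shows "(SUP i. f i) = (SUP n. g n)"
proof -
  have "(\<forall>x\<in>range f. x \<le> z) \<longleftrightarrow> (\<forall>x\<in>range g. x \<le> z)" for z
  proof
    assume H: "\<forall>x\<in>range f. x \<le> z"
    show "\<forall>x\<in>range g. x \<le> z"
    proof
      fix x assume "x \<in> range g" then obtain n where "x = g n" by blast
      moreover obtain i where "g n \<le> f i" using assms(2) by blast
      ultimately show "x \<le> z" using H by (meson order_trans rangeI)
    qed
  next
    assume H: "\<forall>x\<in>range g. x \<le> z"
    show "\<forall>x\<in>range f. x \<le> z"
    proof
      fix x assume "x \<in> range f" then obtain n where "x = f n" by blast
      moreover obtain i where "f n \<le> g i" using assms(1) by blast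
      ultimately show "x \<le> z" using H by (meson order_trans rangeI)
    qed
  qed
  then show ?thesis unfolding Sup_real_def by simp
qed

primrec stp :: "(nat \<Rightarrow> nat) \<Rightarrow> nat \<Rightarrow> nat \<times> nat" where
  "stp L 0 = (0, 0)"
| "stp L (Suc i) = (if Suc (snd (stp L i)) < L (fst (stp L i))
      then (fst (stp L i), Suc (snd (stp L i))) else (Suc (fst (stp L i)), 0))"

lemma stp_inv: "(\<And>j. 0 < L j) \<Longrightarrow> snd (stp L i) < L (fst (stp L i))"
  by (induct i) auto

lemma stp_seg: "stp L i = (j, 0) \<Longrightarrow> k < L j \<Longrightarrow> stp L (i + k) = (j, k)"
  by (induct k) auto

lemma stp_reach: "(\<And>j. 0 < L j) \<Longrightarrow> \<exists>i. stp L i = (j, 0)"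
proof (induct j)
  case 0 then show ?case by (intro exI[of _ 0]) simp
next
  case (Suc j)
  then obtain i where i: "stp L i = (j, 0)" by blast
  obtain k where k: "Suc k = L j" using Suc.prems[of j] by (metis Suc_pred)
  then have "stp L (i + k) = (j, k)" using stp_seg i by (metis lessI)
  then have "stp L (Suc (i + k)) = (Suc j, 0)" using k by simp
  then show ?case by blast
qed

lemma path_rtranclp:
  "(\<And>k. k < n \<Longrightarrow> R (h k) (h (Suc k))) \<Longrightarrow> a \<le> b \<Longrightarrow> b \<le> n \<Longrightarrow> R\<^sup>*\<^sup>* (h a) (h b)"
proof (induct b)
  case 0 then show ?case by simp
next
  case (Suc b)
  show ?case
  proof (cases "a = Suc b")
    case True then show ?thesis by simp
  next
    case False
    then have "R\<^sup>*\<^sup>* (h a) (h b)" using Suc by simp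
    moreover have "R (h b) (h (Suc b))" using Suc by simp
    ultimately show ?thesis by simp
  qed
qed

theorem mainTheorem8:
  assumes "is_mdist m"
    and "obs_rel (lift step) m r"
  shows "obs_rel (lift E_step) m r"
proof -
  obtain ms where ms: "max_seq (lift step) m ms" "r = (\<lambda>N. SUP n. obs_Nnf (ms n) N)"
    using assms(2) unfolding obs_rel_def by blast
  have ms0: "ms 0 = m" using ms unfolding max_seq_def by blast
  have st: "LR step (ms n) (ms (Suc n))" for n
  proof -
    have "lift step (ms n) (ms n)" using LR_refl lift_iff by blast
    then show ?thesis using ms unfolding max_seq_def lift_iff by blast
  qed
  have nn: "nonneg m" using assms(1) unfolding is_mdist_def nonneg_def by auto
  define Spec where "Spec = (\<lambda>j cj u. (LR E_step)\<^sup>*\<^sup>* cj u \<and> (LR step)\<^sup>*\<^sup>* u (ms (Suc j)) \<and>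
      (\<forall>N. obs_Nnf (ms (Suc j)) N \<le> obs_Nnf u N))"
  define c where "c = rec_nat m (\<lambda>j cj. SOME u. Spec j cj u)"
  have c0: "c 0 = m" and cS: "c (Suc j) = (SOME u. Spec j (c j) u)" for j
    unfolding c_def by simp_all
  have exSpec: "(LR step)\<^sup>*\<^sup>* (c j) (ms j) \<Longrightarrow> Spec j (c j) (c (Suc j))" for j
  proof -
    assume "(LR step)\<^sup>*\<^sup>* (c j) (ms j)"
    then have "(LR step)\<^sup>*\<^sup>* (c j) (ms (Suc j))" using st by (meson rtranclp.rtrancl_into_rtrancl)
    then have "\<exists>u. Spec j (c j) u" using Key unfolding Spec_def by blast
    then show ?thesis unfolding cS by (rule someI_ex)
  qed
  have cms: "(LR step)\<^sup>*\<^sup>* (c j) (ms j)" for j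
  proof (induct j)
    case 0 then show ?case using c0 ms0 by simp
  next
    case (Suc j) then show ?case using exSpec unfolding Spec_def by blast
  qed
  have spec: "Spec j (c j) (c (Suc j))" for j using exSpec cms by blast
  have "\<forall>j. \<exists>n f. f 0 = c j \<and> f n = c (Suc j) \<and> (\<forall>i<n. LR E_step (f i) (f (Suc i)))"
  proof
    fix j
    have "(LR E_step)\<^sup>*\<^sup>* (c j) (c (Suc j))" using spec unfolding Spec_def by blast
    then obtain n where "((LR E_step) ^^ n) (c j) (c (Suc j))" by (auto simp: rtranclp_power)
    then show "\<exists>n f. f 0 = c j \<and> f n = c (Suc j) \<and> (\<forall>i<n. LR E_step (f i) (f (Suc i)))"
      by (auto simp: relpowp_fun_conv)
  qed
  then obtain nn ff where seg: "\<And>j. ff j 0 = c j" "\<And>j. ff j (nn j) = c (Suc j)"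
    "\<And>j i. i < nn j \<Longrightarrow> LR E_step (ff j i) (ff j (Suc i))"
    by metis
  define L where "L = (\<lambda>j. Suc (nn j))"
  define g where "g = (\<lambda>j k. if k \<le> nn j then ff j k else c (Suc j))"
  have Lpos: "\<And>j. 0 < L j" unfolding L_def by simp
  have g0: "g j 0 = c j" for j unfolding g_def using seg by simp
  have gL: "g j (L j) = c (Suc j)" for j unfolding g_def L_def by simp
  have gstep: "k < L j \<Longrightarrow> LR E_step (g j k) (g j (Suc k))" for j k
  proof -
    assume "k < L j"
    then consider "k < nn j" | "k = nn j" unfolding L_def by linarith
    then show ?thesis
    proof cases
      case 1 then show ?thesis unfolding g_def using seg by simp
    next
      case 2 then show ?thesis unfolding g_def using seg LR_refl by simp
    qed
  qed
  have gpre: "k \<le> L j \<Longrightarrow> (LR E_step)\<^sup>*\<^sup>* (c j) (g j k)" for j k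
    using path_rtranclp[of "L j" "LR E_step" "g j" 0 k] gstep g0 by simp
  have gpost: "k \<le> L j \<Longrightarrow> (LR E_step)\<^sup>*\<^sup>* (g j k) (c (Suc j))" for j k
    using path_rtranclp[of "L j" "LR E_step" "g j" k "L j"] gstep gL by simp
  have mc: "(LR E_step)\<^sup>*\<^sup>* m (c j)" for j
  proof (induct j)
    case 0 then show ?case using c0 by simp
  next
    case (Suc j) then show ?case using spec unfolding Spec_def by (meson rtranclp_trans)
  qed
  define T where "T = (\<lambda>i. g (fst (stp L i)) (snd (stp L i)))"
  have T0: "T 0 = m" unfolding T_def using g0 c0 by simp
  have Tstep: "LR E_step (T i) (T (Suc i))" for i
  proof -
    obtain j k where jk: "stp L i = (j, k)" by force
    have kL: "k < L j" using stp_inv[of L i, OF Lpos] jk by simp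
    show ?thesis
    proof (cases "Suc k < L j")
      case True
      then show ?thesis unfolding T_def using jk gstep kL by simp
    next
      case False
      then have "Suc k = L j" using kL by simp
      then have "g j k = c (Suc j)" unfolding g_def L_def using seg by simp
      moreover have "T (Suc i) = g (Suc j) 0" unfolding T_def using jk False by simp
      ultimately show ?thesis unfolding T_def using jk g0 LR_refl by simp
    qed
  qed
  have Tup: "\<exists>n. obs_Nnf (T i) N \<le> obs_Nnf (ms n) N" for i N
  proof -
    obtain j k where jk: "stp L i = (j, k)" by force
    have kL: "k < L j" using stp_inv[of L i, OF Lpos] jk by simp
    have Ti: "T i = g j k" unfolding T_def using jk by simp
    have "(LR E_step)\<^sup>*\<^sup>* (c j) (g j k)" using gpre kL by simp
    then have "(LR E_step)\<^sup>*\<^sup>* m (g j k)" using mc by (metis rtranclp_trans)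
    then have "(LR step)\<^sup>*\<^sup>* m (T i)" unfolding Ti by (rule LRs_mono) (rule E_step_step)
    then have "nonneg (T i)" using LRSs_nonneg nn by blast
    moreover have "(LR step)\<^sup>*\<^sup>* (T i) (ms (Suc j))"
    proof -
      have "(LR E_step)\<^sup>*\<^sup>* (g j k) (c (Suc j))" using gpost kL by simp
      then have "(LR step)\<^sup>*\<^sup>* (g j k) (c (Suc j))" by (rule LRs_mono) (rule E_step_step)
      moreover have "(LR step)\<^sup>*\<^sup>* (c (Suc j)) (ms (Suc j))" using spec unfolding Spec_def by blast
      ultimately show ?thesis unfolding Ti by (metis rtranclp_trans)
    qed
    ultimately show ?thesis using LRSs_obs by blast
  qed
  have Tlow: "\<exists>i. obs_Nnf (ms n) N \<le> obs_Nnf (T i) N" for n N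
  proof -
    obtain i where "stp L i = (n, 0)" using stp_reach Lpos by blast
    then have Ti: "T i = c n" unfolding T_def using g0 by simp
    have "obs_Nnf (ms n) N \<le> obs_Nnf (c n) N"
    proof (cases n)
      case 0 then show ?thesis using c0 ms0 by simp
    next
      case (Suc j) then show ?thesis using spec[of j] unfolding Spec_def by blast
    qed
    then show ?thesis using Ti by metis
  qed
  have "max_seq (lift E_step) m T"
    unfolding max_seq_def lift_iff using T0 Tstep by blast
  moreover have "r = (\<lambda>N. SUP n. obs_Nnf (T n) N)"
    unfolding ms(2) by (rule ext, rule SUP_eq_real[symmetric]) (use Tup Tlow in blast)+
  ultimately show ?thesis unfolding obs_rel_def by blast
qed


end
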